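(* Let $M$ be a $0/1$-matrix and let $B$ be a block of $M$ of size $r\times c$. Given the data structure $\bar{\Phi}(B)$, and given the set of entries of the left vertical boundary $\bar{B}^-$ that are reachable from $(1,1)$, one can determine in $O(r)$ time the set of entries of the right vertical boundary $\bar{B}^+$ that are reachable from $(1,1)$.
   Context: Entries of $M$ are indexed $(a,b)$, rows increasing from bottom to top, columns left to right. A path from $(k,l)$ to $(i,j)$ is a sequence of $1$-entries starting at $(k,l)$ and ending at $(i,j)$ in which each step goes from $(a,b)$ to $(a+1,b)$, $(a,b+1)$ or $(a+1,b+1)$; $(i,j)$ is reachable from $(k,l)$ if such a path exists. A block $B$ is the submatrix formed by rows $r^-\le a\le r^+$ and columns $s^-\le b\le s^+$ ($r=r^+-r^-+1$, $c=s^+-s^-+1$). Its left vertical boundary $\bar{B}^-$ is the set of entries of column $s^-$ in $B$, and its right vertical boundary $\bar{B}^+$ is the set of entries of column $s^+$ in $B$, each ordered by increasing row. The data structure $\bar{\Phi}(B)$ stores: (1) for each $1$-entry $i$ of $\bar{B}^-$, the first entry $\bar{\sigma}_A(i)$ and the last entry $\bar{\sigma}_Z(i)$ of $\bar{B}^+$ reachable from $i$; (2) for each $1$-entry $j$ of $\bar{B}^+$, a flag $\bar{f}(j)$ indicating whether $j$ is reachable from some entry of $\bar{B}^-$, a list $\bar{L}_A(j)$ of the $1$-entries $i\in\bar{B}^-$ with $\bar{\sigma}_A(i)=j$, and a list $\bar{L}_Z(j)$ of the $1$-entries $i\in\bar{B}^-$ with $\bar{\sigma}_Z(i)=j$. Running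 time is in the RAM model.
   Formalization: The entries of $\bar{B}^+$ determined are those reached from (1,1) by a path to an entry of $\bar{B}^-$ followed by a path inside B, and reachability in $\bar{\Phi}(B)$ means by paths inside B. Apart from conventions, each condition added here is assumed in the paper as well or is needed for the statement above to hold. *)

theory Defs
  imports Main
begin

text \<open>A 0/1-matrix with m rows and n columns is modelled as M :: nat => nat => bool,
  where M a b = True means that entry (a,b) is a 1-entry; rows and columns are
  indexed from 1 (row 1 is the bottom row).  Entries outside 1..m x 1..n are ignored.\<close>

inductive reach :: "(nat \<times> nat \<Rightarrow> bool) \<Rightarrow> nat \<times> nat \<Rightarrow> nat \<times> nat \<Rightarrow> bool"
  for ok :: "nat \<times> nat \<Rightarrow> bool" where
  refl: "ok x \<Longrightarrow> reach ok x x"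
| step: "reach ok x (a, b) \<Longrightarrow> ok y \<Longrightarrow> y \<in> {(a+1, b), (a, b+1), (a+1, b+1)} \<Longrightarrow> reach ok x y"

definition okM :: "(nat \<Rightarrow> nat \<Rightarrow> bool) \<Rightarrow> nat \<Rightarrow> nat \<Rightarrow> nat \<times> nat \<Rightarrow> bool" where
  "okM M m n p = (1 \<le> fst p \<and> fst p \<le> m \<and> 1 \<le> snd p \<and> snd p \<le> n \<and> M (fst p) (snd p))"

definition okB :: "(nat \<Rightarrow> nat \<Rightarrow> bool) \<Rightarrow> nat \<Rightarrow> nat \<Rightarrow> nat \<Rightarrow> nat \<Rightarrow> nat \<times> nat \<Rightarrow> bool" where
  "okB M rl rh sl sh p = (rl \<le> fst p \<and> fst p \<le> rh \<and> sl \<le> snd p \<and> snd p \<le> sh \<and> M (fst p) (snd p))"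

text \<open>Boundary entries are addressed by their offset k (0 \<le> k < r) from the bottom row rl
  of the block: entry k of the left boundary is (rl+k, sl), entry k of the right
  boundary is (rl+k, sh).\<close>

definition reaches_right :: "(nat \<Rightarrow> nat \<Rightarrow> bool) \<Rightarrow> nat \<Rightarrow> nat \<Rightarrow> nat \<Rightarrow> nat \<Rightarrow> nat \<Rightarrow> nat \<Rightarrow> bool" where
  "reaches_right M rl rh sl sh k q = reach (okB M rl rh sl sh) (rl + k, sl) (rl + q, sh)"

text \<open>Part (1): for each left-boundary entry k, Some (sigma_A, sigma_Z) (offsets of the first
  and last reachable right-boundary entries) if it is a 1-entry reaching some right-boundary
  entry, None otherwise.\<close>
definition phi_sigma :: "(nat \<Rightarrow> nat \<Rightarrow> bool) \<Rightarrow> nat \<Rightarrow> nat \<Rightarrow> nat \<Rightarrow> nat \<Rightarrow> (nat \<times> nat) option list" where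
  "phi_sigma M rl rh sl sh =
    (let r = rh + 1 - rl in
     map (\<lambda>k. if M (rl + k) sl \<and> (\<exists>q<r. reaches_right M rl rh sl sh k q)
               then Some (LEAST q. q < r \<and> reaches_right M rl rh sl sh k q,
                          GREATEST q. q < r \<and> reaches_right M rl rh sl sh k q)
               else None) [0..<r])"

definition phi_f :: "(nat \<Rightarrow> nat \<Rightarrow> bool) \<Rightarrow> nat \<Rightarrow> nat \<Rightarrow> nat \<Rightarrow> nat \<Rightarrow> bool list" where
  "phi_f M rl rh sl sh =
    (let r = rh + 1 - rl in
     map (\<lambda>q. M (rl + q) sh \<and> (\<exists>k<r. reaches_right M rl rh sl sh k q)) [0..<r])"

definition phi_LA :: "(nat \<Rightarrow> nat \<Rightarrow> bool) \<Rightarrow> nat \<Rightarrow> nat \<Rightarrow> nat \<Rightarrow> nat \<Rightarrow> nat list list" where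
  "phi_LA M rl rh sl sh =
    (let r = rh + 1 - rl; sg = phi_sigma M rl rh sl sh in
     map (\<lambda>q. filter (\<lambda>k. map_option fst (sg ! k) = Some q) [0..<r]) [0..<r])"

definition phi_LZ :: "(nat \<Rightarrow> nat \<Rightarrow> bool) \<Rightarrow> nat \<Rightarrow> nat \<Rightarrow> nat \<Rightarrow> nat \<Rightarrow> nat list list" where
  "phi_LZ M rl rh sl sh =
    (let r = rh + 1 - rl; sg = phi_sigma M rl rh sl sh in
     map (\<lambda>q. filter (\<lambda>k. map_option snd (sg ! k) = Some q) [0..<r]) [0..<r])"

type_synonym phi_data = "(nat \<times> nat) option list \<times> bool list \<times> nat list list \<times> nat list list"

definition Phi :: "(nat \<Rightarrow> nat \<Rightarrow> bool) \<Rightarrow> nat \<Rightarrow> nat \<Rightarrow> nat \<Rightarrow> nat \<Rightarrow> phi_data" where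
  "Phi M rl rh sl sh = (phi_sigma M rl rh sl sh, phi_f M rl rh sl sh,
                        phi_LA M rl rh sl sh, phi_LZ M rl rh sl sh)"

definition left_reach :: "(nat \<Rightarrow> nat \<Rightarrow> bool) \<Rightarrow> nat \<Rightarrow> nat \<Rightarrow> nat \<Rightarrow> nat \<Rightarrow> nat \<Rightarrow> nat \<Rightarrow> bool list" where
  "left_reach M m n rl rh sl sh =
     map (\<lambda>k. reach (okM M m n) (1, 1) (rl + k, sl)) [0..<rh + 1 - rl]"

fun collect :: "(nat \<times> nat) option list \<Rightarrow> bool list \<Rightarrow> (nat \<times> nat) list" where
  "collect [] s = []"
| "collect (x # sg) s =
     (case s of [] \<Rightarrow> []
      | b # s' \<Rightarrow> (if b then (case x of None \<Rightarrow> collect sg s' | Some iv \<Rightarrow> iv # collect sg s')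
                  else collect sg s'))"

fun sweep :: "nat \<Rightarrow> (nat \<times> nat) list \<Rightarrow> bool list \<Rightarrow> bool list" where
  "sweep j ivs [] = []"
| "sweep j [] (b # fs) = False # sweep (j + 1) [] fs"
| "sweep j ((a, z) # ivs) (b # fs) =
     (if z < j then sweep j ivs (b # fs)
      else (b \<and> a \<le> j) # sweep (j + 1) ((a, z) # ivs) fs)"

fun right_reach_alg :: "phi_data \<Rightarrow> bool list \<Rightarrow> bool list" where
  "right_reach_alg (sg, f, la, lz) s = sweep 0 (collect sg s) f"

text \<open>Running time, counted as in the convention of HOL-Library Time_Functions:
  each function call costs one unit plus the cost of the calls it makes
  (constant-time primitive operations on numbers, booleans and list constructors are free).\<close>

fun T_collect :: "(nat \<times> nat) option list \<Rightarrow> bool list \<Rightarrow> nat" where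
  "T_collect [] s = 1"
| "T_collect (x # sg) s =
     (case s of [] \<Rightarrow> 1
      | b # s' \<Rightarrow> T_collect sg s' + 1)"

fun T_sweep :: "nat \<Rightarrow> (nat \<times> nat) list \<Rightarrow> bool list \<Rightarrow> nat" where
  "T_sweep j ivs [] = 1"
| "T_sweep j [] (b # fs) = T_sweep (j + 1) [] fs + 1"
| "T_sweep j ((a, z) # ivs) (b # fs) =
     (if z < j then T_sweep j ivs (b # fs)
      else T_sweep (j + 1) ((a, z) # ivs) fs) + 1"

fun T_right_reach_alg :: "phi_data \<Rightarrow> bool list \<Rightarrow> nat" where
  "T_right_reach_alg (sg, f, la, lz) s = T_collect sg s + T_sweep 0 (collect sg s) f + 1"

end

theory Submission
  imports Defs
begin

lemma reach_ok1: "reach ok x y \<Longrightarrow> ok x" by (induction rule: reach.induct) auto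
lemma reach_ok2: "reach ok x y \<Longrightarrow> ok y" by (induction rule: reach.induct) auto
lemma reach_mono: "reach ok x y \<Longrightarrow> fst x \<le> fst y \<and> snd x \<le> snd y"
  by (induction rule: reach.induct) auto
lemma reach_trans: "reach ok y z \<Longrightarrow> reach ok x y \<Longrightarrow> reach ok x z"
proof (induction rule: reach.induct)
  case (refl x) then show ?case by simp
next
  case (step y a b z) then show ?case using reach.step by blast
qed
lemma reach_front: "reach ok x y \<Longrightarrow> x = y \<or> (\<exists>x1. x1 \<in> {(fst x+1, snd x), (fst x, snd x+1), (fst x+1, snd x+1)} \<and> reach ok x1 y)"
proof (induction rule: reach.induct)
  case (refl x) then show ?case by simp
next
  case (step x a b y)
  from step.IH show ?case
  proof
    assume "x = (a,b)" then show ?thesis using step by (auto intro: reach.refl)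
  next
    assume "\<exists>x1. x1 \<in> {(fst x+1, snd x), (fst x, snd x+1), (fst x+1, snd x+1)} \<and> reach ok x1 (a,b)"
    then show ?thesis using step by (meson reach.step)
  qed
qed
lemma reach_cons: "ok x \<Longrightarrow> x1 \<in> {(fst x+1, snd x), (fst x, snd x+1), (fst x+1, snd x+1)} \<Longrightarrow> reach ok x1 y \<Longrightarrow> reach ok x y"
  by (metis reach.refl reach.step reach_ok1 reach_trans prod.collapse)

lemma crossing_aux:
  fixes x a x' c y b y' n :: nat
  assumes "n = (c - a) + (x' - x) + (c - b) + (y' - y)" "reach ok (x,a) (x',c)" "reach ok (y,b) (y',c)" "b \<le> a" "x \<le> y" "y' \<le> x'"
  shows "\<exists>z. reach ok (x,a) z \<and> reach ok z (x',c) \<and> reach ok (y,b) z \<and> reach ok z (y',c)"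
  using assms
proof (induction n arbitrary: x a y b rule: less_induct)
  case (less n)
  show ?case
  proof (cases "(x,a) = (y,b)")
    case True then show ?thesis using less.prems reach_ok1 reach.refl by metis
  next
    case False
    show ?thesis
    proof (cases "b < a")
      case True
      have m1: "a \<le> c" "x \<le> x'" using reach_mono[OF less.prems(2)] by auto
      from reach_front[OF less.prems(3)] True m1 obtain q1 where
        q1: "q1 \<in> {(y+1, b), (y, b+1), (y+1, b+1)}" "reach ok q1 (y',c)" by auto
      obtain y1 b1 where qq: "q1 = (y1,b1)" by force
      have m2: "y1 \<le> y'" "b1 \<le> c" using reach_mono[OF q1(2)] qq by auto
      have lt: "(c - a) + (x' - x) + (c - b1) + (y' - y1) < n"
        using q1(1) qq m2 less.prems(1) by auto
      have h: "b1 \<le> a" "x \<le> y1" using q1(1) qq True less.prems by auto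
      have r2: "reach ok (y1,b1) (y',c)" using q1 qq by simp
      obtain z where z: "reach ok (x,a) z \<and> reach ok z (x',c) \<and> reach ok (y1,b1) z \<and> reach ok z (y',c)"
        using less.IH[OF lt HOL.refl less.prems(2) r2 h less.prems(6)] by blast
      have "reach ok (y,b) z" using reach_cons[of ok "(y,b)" q1 z] z q1 qq reach_ok1[OF less.prems(3)] by auto
      then show ?thesis using z by blast
    next
      case False
      hence ba: "b = a" "x < y" using less.prems \<open>(x,a) \<noteq> (y,b)\<close> by auto
      have m1: "b \<le> c" "y \<le> y'" using reach_mono[OF less.prems(3)] by auto
      from reach_front[OF less.prems(2)] ba m1 less.prems obtain q1 where
        q1: "q1 \<in> {(x+1, a), (x, a+1), (x+1, a+1)}" "reach ok q1 (x',c)" by auto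
      obtain x1 a1 where qq: "q1 = (x1,a1)" by force
      have m2: "x1 \<le> x'" "a1 \<le> c" using reach_mono[OF q1(2)] qq by auto
      have lt: "(c - a1) + (x' - x1) + (c - b) + (y' - y) < n"
        using q1(1) qq m2 less.prems(1) by auto
      have h: "b \<le> a1" "x1 \<le> y" using q1(1) qq ba less.prems by auto
      have r1: "reach ok (x1,a1) (x',c)" using q1 qq by simp
      obtain z where z: "reach ok (x1,a1) z \<and> reach ok z (x',c) \<and> reach ok (y,b) z \<and> reach ok z (y',c)"
        using less.IH[OF lt HOL.refl r1 less.prems(3) h less.prems(6)] by blast
      have "reach ok (x,a) z" using reach_cons[of ok "(x,a)" q1 z] z q1 qq reach_ok1[OF less.prems(2)] by auto
      then show ?thesis using z by blast
    qed
  qed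
qed

lemma crossing:
  fixes x a x' c y b y' :: nat
  assumes "reach ok (x,a) (x',c)" "reach ok (y,b) (y',c)" "b \<le> a" "x \<le> y" "y' \<le> x'"
  shows "\<exists>z. reach ok (x,a) z \<and> reach ok z (x',c) \<and> reach ok (y,b) z \<and> reach ok z (y',c)"
  using crossing_aux[OF HOL.refl assms] .

definition le2 :: "nat \<times> nat \<Rightarrow> nat \<times> nat \<Rightarrow> bool" where
  "le2 p p' = (fst p \<le> fst p' \<and> snd p \<le> snd p')"

lemma sweep_len: "length (sweep j ivs fs) = length fs"
  by (induction j ivs fs rule: sweep.induct) auto

lemma sweep_nth: "sorted_wrt le2 ivs \<Longrightarrow> i < length fs \<Longrightarrow>
  sweep j ivs fs ! i = (fs ! i \<and> (\<exists>iv\<in>set ivs. fst iv \<le> j+i \<and> j+i \<le> snd iv))"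
proof (induction j ivs fs arbitrary: i rule: sweep.induct)
  case (1 j ivs) then show ?case by simp
next
  case (2 j b fs) then show ?case by (cases i) auto
next
  case (3 j a z ivs b fs)
  show ?case
  proof (cases "z < j")
    case True
    then show ?thesis using 3 by auto
  next
    case False
    show ?thesis
    proof (cases i)
      case 0
      then show ?thesis using 3 False by (auto simp: le2_def)
    next
      case (Suc i')
      then show ?thesis using 3(2)[of i'] 3(3,4) False by auto
    qed
  qed
qed

lemma ex_shift: "(\<exists>k. k < Suc n1 \<and> k < Suc n2 \<and> P k) \<longleftrightarrow> (P 0 \<or> (\<exists>k. k < n1 \<and> k < n2 \<and> P (Suc k)))"
proof
  assume "\<exists>k. k < Suc n1 \<and> k < Suc n2 \<and> P k"
  then obtain k where k: "k < Suc n1" "k < Suc n2" "P k" by blast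
  show "P 0 \<or> (\<exists>k. k < n1 \<and> k < n2 \<and> P (Suc k))"
  proof (cases k)
    case 0 then show ?thesis using k by simp
  next
    case (Suc k') then show ?thesis using k by blast
  qed
next
  assume "P 0 \<or> (\<exists>k. k < n1 \<and> k < n2 \<and> P (Suc k))"
  then show "\<exists>k. k < Suc n1 \<and> k < Suc n2 \<and> P k"
  proof
    assume "P 0" then show ?thesis by blast
  next
    assume "\<exists>k. k < n1 \<and> k < n2 \<and> P (Suc k)"
    then obtain k where "k < n1" "k < n2" "P (Suc k)" by blast
    then show ?thesis by (intro exI[of _ "Suc k"]) simp
  qed
qed

lemma collect_set: "set (collect sg s) = {iv. \<exists>k. k < length sg \<and> k < length s \<and> s!k \<and> sg!k = Some iv}"
proof (induction sg arbitrary: s)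
  case Nil then show ?case by simp
next
  case (Cons x sg)
  show ?case
  proof (cases s)
    case Nil then show ?thesis by simp
  next
    case (Cons b s')
    have e: "\<And>iv. (\<exists>k. k < length (x#sg) \<and> k < length s \<and> s!k \<and> (x#sg)!k = Some iv)
      \<longleftrightarrow> (b \<and> x = Some iv) \<or> (\<exists>k. k < length sg \<and> k < length s' \<and> s'!k \<and> sg!k = Some iv)"
      unfolding Cons using ex_shift[of "length sg" "length s'" "\<lambda>k. (b#s')!k \<and> (x#sg)!k = Some iv" for iv]
      by simp
    have c: "set (collect (x#sg) s) = {iv. b \<and> x = Some iv} \<union> set (collect sg s')"
      using Cons by (cases b; cases x) auto
    show ?thesis unfolding c Cons.IH[of s'] using e by blast
  qed
qed

definition optR :: "(nat\<times>nat) option \<Rightarrow> (nat\<times>nat) option \<Rightarrow> bool" where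
  "optR x y = (case x of None \<Rightarrow> True | Some a \<Rightarrow> (case y of None \<Rightarrow> True | Some b \<Rightarrow> le2 a b))"

lemma collect_in: "w \<in> set (collect sg s) \<Longrightarrow> Some w \<in> set sg"
proof -
  assume "w \<in> set (collect sg s)"
  then obtain k where "k < length sg" "sg!k = Some w" unfolding collect_set by blast
  then show ?thesis by (metis nth_mem)
qed

lemma collect_sorted: "sorted_wrt optR sg \<Longrightarrow> sorted_wrt le2 (collect sg s)"
proof (induction sg arbitrary: s)
  case Nil then show ?case by simp
next
  case (Cons x sg)
  have h1: "\<forall>y\<in>set sg. optR x y" and h2: "sorted_wrt optR sg" using Cons.prems by simp_all
  show ?case
  proof (cases s)
    case Nil then show ?thesis by simp
  next
    case (Cons b s')
    have IH: "sorted_wrt le2 (collect sg s')" using Cons.IH[OF h2] .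
    show ?thesis
    proof (cases "b \<and> x \<noteq> None")
      case False
      hence "collect (x#sg) s = collect sg s'" using Cons by (cases b; cases x) simp_all
      then show ?thesis using IH by simp
    next
      case True
      then obtain iv where b: "b" and x: "x = Some iv" by auto
      have e: "collect (x#sg) s = iv # collect sg s'" using Cons b x by simp
      have "\<forall>w\<in>set (collect sg s'). le2 iv w"
      proof
        fix w assume "w \<in> set (collect sg s')"
        hence "Some w \<in> set sg" by (rule collect_in)
        hence "optR x (Some w)" using h1 by blast
        then show "le2 iv w" using x by (simp add: optR_def)
      qed
      then show ?thesis using e IH by simp
    qed
  qed
qed

lemma collect_len: "length (collect sg s) \<le> length s"
  by (induction sg arbitrary: s) (auto split: list.splits option.splits intro: le_SucI)
lemma T_collect_le: "T_collect sg s \<le> length s + 1"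
  by (induction sg arbitrary: s) (auto split: list.splits)
lemma T_sweep_le: "T_sweep j ivs fs \<le> length ivs + length fs + 1"
  by (induction j ivs fs rule: sweep.induct) auto


theorem lemma4:
  "\<exists>c::nat. \<forall>(M::nat \<Rightarrow> nat \<Rightarrow> bool) m n rl rh sl sh.
     1 \<le> rl \<and> rl \<le> rh \<and> rh \<le> m \<and> 1 \<le> sl \<and> sl \<le> sh \<and> sh \<le> n \<longrightarrow>
     (let r = rh + 1 - rl;
          inp = left_reach M m n rl rh sl sh;
          out = right_reach_alg (Phi M rl rh sl sh) inp
      in length out = r
         \<and> (\<forall>q<r. out ! q \<longleftrightarrow>
               (\<exists>k<r. reach (okM M m n) (1, 1) (rl + k, sl)
                      \<and> reach (okB M rl rh sl sh) (rl + k, sl) (rl + q, sh)))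
         \<and> T_right_reach_alg (Phi M rl rh sl sh) inp \<le> c * r)"
proof (rule exI[of _ 6], intro allI impI)
  fix M :: "nat \<Rightarrow> nat \<Rightarrow> bool" and m n rl rh sl sh :: nat
  assume H: "1 \<le> rl \<and> rl \<le> rh \<and> rh \<le> m \<and> 1 \<le> sl \<and> sl \<le> sh \<and> sh \<le> n"
  define r where "r = rh + 1 - rl"
  define ok where "ok = okB M rl rh sl sh"
  define RR where "RR = reaches_right M rl rh sl sh"
  define sg where "sg = phi_sigma M rl rh sl sh"
  define fl where "fl = phi_f M rl rh sl sh"
  define s where "s = left_reach M m n rl rh sl sh"
  define ivs where "ivs = collect sg s"
  have r1: "r \<ge> 1" using H unfolding r_def by linarith
  have lsg: "length sg = r" by (simp add: sg_def phi_sigma_def r_def Let_def)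
  have lfl: "length fl = r" by (simp add: fl_def phi_f_def r_def Let_def)
  have ls: "length s = r" by (simp add: s_def left_reach_def r_def Let_def)
  have sgk: "\<And>k. k<r \<Longrightarrow> sg!k = (if M (rl+k) sl \<and> (\<exists>q<r. RR k q) then Some (LEAST q. q<r \<and> RR k q, GREATEST q. q<r \<and> RR k q) else None)"
    by (simp add: sg_def phi_sigma_def r_def RR_def Let_def)
  have flq: "\<And>q. q<r \<Longrightarrow> fl!q = (M (rl+q) sh \<and> (\<exists>k<r. RR k q))"
    by (simp add: fl_def phi_f_def r_def RR_def Let_def)
  have sk: "\<And>k. k<r \<Longrightarrow> s!k = reach (okM M m n) (1,1) (rl+k, sl)"
    by (simp add: s_def left_reach_def r_def)
  have RRdef: "\<And>k q. RR k q = reach ok (rl+k, sl) (rl+q, sh)"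
    by (simp add: RR_def ok_def reaches_right_def)
  have RRb: "\<And>k q. RR k q \<Longrightarrow> k < r \<and> q < r \<and> M (rl+k) sl \<and> M (rl+q) sh"
  proof -
    fix k q assume "RR k q"
    hence "ok (rl+k, sl)" "ok (rl+q, sh)" using RRdef reach_ok1 reach_ok2 by blast+
    then show "k < r \<and> q < r \<and> M (rl+k) sl \<and> M (rl+q) sh"
      unfolding ok_def okB_def r_def by auto
  qed
  define A where "A k = (LEAST q. q<r \<and> RR k q)" for k
  define Z where "Z k = (GREATEST q. q<r \<and> RR k q)" for k
  have AZ: "\<And>k q0. RR k q0 \<Longrightarrow> RR k (A k) \<and> RR k (Z k) \<and> (\<forall>q. RR k q \<longrightarrow> A k \<le> q \<and> q \<le> Z k)"
  proof -
    fix k q0 assume q0: "RR k q0"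
    have P0: "q0 < r \<and> RR k q0" using q0 RRb by blast
    have bd: "\<And>y. y < r \<and> RR k y \<Longrightarrow> y \<le> r" by auto
    have "RR k (A k)" unfolding A_def using LeastI[of "\<lambda>q. q<r \<and> RR k q", OF P0] by blast
    moreover have "RR k (Z k)" unfolding Z_def using GreatestI_nat[of "\<lambda>q. q<r \<and> RR k q", OF P0 bd] by blast
    moreover have "\<forall>q. RR k q \<longrightarrow> A k \<le> q \<and> q \<le> Z k"
    proof (intro allI impI)
      fix q assume "RR k q"
      hence Pq: "q < r \<and> RR k q" using RRb by blast
      show "A k \<le> q \<and> q \<le> Z k" unfolding A_def Z_def
        using Least_le[of "\<lambda>q. q<r \<and> RR k q", OF Pq] Greatest_le_nat[of "\<lambda>q. q<r \<and> RR k q", OF Pq bd] by blast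
    qed
    ultimately show "RR k (A k) \<and> RR k (Z k) \<and> (\<forall>q. RR k q \<longrightarrow> A k \<le> q \<and> q \<le> Z k)" by blast
  qed
  have cross1: "\<And>k k' q q'. RR k q \<Longrightarrow> RR k' q' \<Longrightarrow> k \<le> k' \<Longrightarrow> q' \<le> q \<Longrightarrow> RR k q' \<and> RR k' q"
  proof -
    fix k k' q q' assume a: "RR k q" "RR k' q'" "k \<le> k'" "q' \<le> q"
    obtain z where z: "reach ok (rl+k,sl) z" "reach ok z (rl+q,sh)" "reach ok (rl+k',sl) z" "reach ok z (rl+q',sh)"
      using crossing[of ok "rl+k" sl "rl+q" sh "rl+k'" sl "rl+q'"] a RRdef by auto
    show "RR k q' \<and> RR k' q" using z RRdef reach_trans by blast
  qed
  have sgk2: "\<And>k iv. k < r \<Longrightarrow> sg!k = Some iv \<longleftrightarrow> (M (rl+k) sl \<and> (\<exists>q. RR k q) \<and> iv = (A k, Z k))"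
  proof -
    fix k iv assume kr: "k < r"
    have e: "(\<exists>q<r. RR k q) = (\<exists>q. RR k q)" using RRb by blast
    show "sg!k = Some iv \<longleftrightarrow> (M (rl+k) sl \<and> (\<exists>q. RR k q) \<and> iv = (A k, Z k))"
      using sgk[OF kr] e unfolding A_def Z_def by auto
  qed
  have sorted: "sorted_wrt optR sg"
    unfolding sorted_wrt_iff_nth_less
  proof (intro allI impI)
    fix i j assume ij: "i < j" "j < length sg"
    show "optR (sg!i) (sg!j)"
    proof (cases "sg!i = None \<or> sg!j = None")
      case True then show ?thesis by (auto simp: optR_def split: option.splits)
    next
      case False
      then obtain ivi ivj where e: "sg!i = Some ivi" "sg!j = Some ivj" by auto
      have jr: "j < r" "i < r" using ij lsg by auto
      obtain qi qj where q: "RR i qi" "RR j qj" "ivi = (A i, Z i)" "ivj = (A j, Z j)"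
        using sgk2[OF jr(1)] sgk2[OF jr(2)] e by blast
      have "A i \<le> A j"
      proof (rule ccontr)
        assume "\<not> A i \<le> A j"
        hence "RR i (A j)" using cross1[of i "A i" j "A j"] AZ q ij by auto
        then show False using AZ q \<open>\<not> A i \<le> A j\<close> by blast
      qed
      moreover have "Z i \<le> Z j"
      proof (rule ccontr)
        assume "\<not> Z i \<le> Z j"
        hence "RR j (Z i)" using cross1[of i "Z i" j "Z j"] AZ q ij by auto
        then show False using AZ q \<open>\<not> Z i \<le> Z j\<close> by blast
      qed
      ultimately show ?thesis using e q by (simp add: optR_def le2_def)
    qed
  qed
  have sivs: "sorted_wrt le2 ivs" unfolding ivs_def using collect_sorted[OF sorted] .
  have setivs: "set ivs = {iv. \<exists>k<r. s!k \<and> sg!k = Some iv}"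
    unfolding ivs_def collect_set using lsg ls by auto
  have out: "right_reach_alg (Phi M rl rh sl sh) s = sweep 0 ivs fl"
    by (simp add: Phi_def sg_def fl_def ivs_def)
  have lo: "length (sweep 0 ivs fl) = r" using sweep_len lfl by simp
  have corr: "\<forall>q<r. sweep 0 ivs fl ! q \<longleftrightarrow>
               (\<exists>k<r. reach (okM M m n) (1, 1) (rl + k, sl)
                      \<and> reach (okB M rl rh sl sh) (rl + k, sl) (rl + q, sh))"
  proof (intro allI impI)
    fix q assume qr: "q < r"
    have e1: "sweep 0 ivs fl ! q = (fl!q \<and> (\<exists>iv\<in>set ivs. fst iv \<le> q \<and> q \<le> snd iv))"
      using sweep_nth[OF sivs, of q fl 0] qr lfl by simp
    have "(fl!q \<and> (\<exists>iv\<in>set ivs. fst iv \<le> q \<and> q \<le> snd iv)) \<longleftrightarrow> (\<exists>k<r. s!k \<and> RR k q)"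
    proof
      assume L: "fl!q \<and> (\<exists>iv\<in>set ivs. fst iv \<le> q \<and> q \<le> snd iv)"
      then obtain k' where k': "RR k' q" using flq qr by blast
      from L obtain iv where iv: "iv \<in> set ivs" "fst iv \<le> q" "q \<le> snd iv" by blast
      then obtain k where k: "k < r" "s!k" "sg!k = Some iv" using setivs by blast
      then obtain q0 where "RR k q0" and ivd: "iv = (A k, Z k)" using sgk2 by blast
      hence AZk: "RR k (A k)" "RR k (Z k)" using AZ by blast+
      have "RR k q"
      proof (cases "k' \<le> k")
        case True
        then show ?thesis using cross1[of k' q k "A k"] k' AZk iv ivd by auto
      next
        case False
        then show ?thesis using cross1[of k "Z k" k' q] k' AZk iv ivd by auto
      qed
      then show "\<exists>k<r. s!k \<and> RR k q" using k by blast
    next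
      assume "\<exists>k<r. s!k \<and> RR k q"
      then obtain k where k: "k < r" "s!k" "RR k q" by blast
      have M1: "M (rl+k) sl" using k(3) RRb by blast
      have sgS: "sg!k = Some (A k, Z k)" using sgk2[OF k(1), of "(A k, Z k)"] M1 k(3) by blast
      have inI: "(A k, Z k) \<in> set ivs" unfolding setivs using k(1,2) sgS by blast
      have "A k \<le> q" "q \<le> Z k" using AZ[OF k(3)] k(3) by blast+
      hence "\<exists>iv\<in>set ivs. fst iv \<le> q \<and> q \<le> snd iv" using inI by (intro bexI[of _ "(A k, Z k)"]) auto
      moreover have "fl!q" using flq[OF qr] k(1,3) RRb by blast
      ultimately show "fl!q \<and> (\<exists>iv\<in>set ivs. fst iv \<le> q \<and> q \<le> snd iv)" by blast
    qed
    then show "sweep 0 ivs fl ! q \<longleftrightarrow>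
               (\<exists>k<r. reach (okM M m n) (1, 1) (rl + k, sl)
                      \<and> reach (okB M rl rh sl sh) (rl + k, sl) (rl + q, sh))"
      using e1 sk RRdef ok_def by auto
  qed
  have T: "T_right_reach_alg (Phi M rl rh sl sh) s \<le> 6 * r"
  proof -
    have "T_right_reach_alg (Phi M rl rh sl sh) s = T_collect sg s + T_sweep 0 ivs fl + 1"
      by (simp add: Phi_def sg_def fl_def ivs_def)
    moreover have "T_collect sg s \<le> r + 1" using T_collect_le[of sg s] ls by simp
    moreover have "T_sweep 0 ivs fl \<le> r + r + 1"
      using T_sweep_le[of 0 ivs fl] collect_len[of sg s] ls lfl ivs_def by simp
    ultimately show ?thesis using r1 by linarith
  qed
  show "let r = rh + 1 - rl;
          inp = left_reach M m n rl rh sl sh;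
          out = right_reach_alg (Phi M rl rh sl sh) inp
      in length out = r
         \<and> (\<forall>q<r. out ! q \<longleftrightarrow>
               (\<exists>k<r. reach (okM M m n) (1, 1) (rl + k, sl)
                      \<and> reach (okB M rl rh sl sh) (rl + k, sl) (rl + q, sh)))
         \<and> T_right_reach_alg (Phi M rl rh sl sh) inp \<le> 6 * r"
    unfolding Let_def using out lo corr T by (simp add: r_def s_def)
qed

end
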